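(* Let $\mathcal{M}$ be the set of compactly supported probability distributions on $\mathbb{R}$ and $\rho:\mathcal{M}\to\mathbb{R}$. Then $\{u\circ\rho: u\in\mathcal{F}_U\}=\{\rho\circ T^u: u\in\mathcal{F}_U\}$ if and only if there exist a strictly monotone, continuous, surjective $h:\mathbb{R}\to\mathbb{R}$ and a quantile $\widehat\rho:\mathcal{M}\to\mathbb{R}$ such that $\rho=h\circ\widehat\rho$.
   Context: $\mathcal{F}_U$ is the set of increasing (non-decreasing) continuous functions $u:\mathbb{R}\to\mathbb{R}$; $T^u(F)$ is the distribution of $u(X)$ when $X\sim F$. For a cdf $F$, $F_L^{-1}(t)=\inf\{x:F(x)\ge t\}$ for $t\in(0,1]$ and $F_R^{-1}(t)=\inf\{x:F(x)>t\}$ for $t\in[0,1)$. A map $\widehat\rho:\mathcal{M}\to\mathbb{R}$ is a quantile if either there is $p\in(0,1]$ with $\widehat\rho(F)=F_L^{-1}(p)$ for all $F$, or there is $p\in[0,1)$ with $\widehat\rho(F)=F_R^{-1}(p)$ for all $F$. *)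

theory Defs
  imports "HOL-Probability.Probability"
begin

definition compact_distrs :: "real measure set" where
  "compact_distrs = {F. prob_space F \<and> sets F = sets borel \<and>
                        (\<exists>K. compact K \<and> emeasure F K = 1)}"

definition FU :: "(real \<Rightarrow> real) set" where
  "FU = {u. mono u \<and> continuous_on UNIV u}"

definition Tu :: "(real \<Rightarrow> real) \<Rightarrow> real measure \<Rightarrow> real measure" where
  "Tu u F = distr F borel u"

definition qL :: "real \<Rightarrow> real measure \<Rightarrow> real" where
  "qL t F = Inf {x. cdf F x \<ge> t}"

definition qR :: "real \<Rightarrow> real measure \<Rightarrow> real" where
  "qR t F = Inf {x. cdf F x > t}"

definition is_quantile :: "(real measure \<Rightarrow> real) \<Rightarrow> bool" where
  "is_quantile rh \<longleftrightarrow>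
     (\<exists>p\<in>{0<..1}. \<forall>F\<in>compact_distrs. rh F = qL p F) \<or>
     (\<exists>p\<in>{0..<1}. \<forall>F\<in>compact_distrs. rh F = qR p F)"

end

theory Submission
  imports Defs
begin

lemma M_D:
  assumes "F \<in> compact_distrs"
  shows "prob_space F" "sets F = sets borel" "space F = UNIV"
  using assms unfolding compact_distrs_def
  by (auto dest: sets_eq_imp_space_eq)

lemma M_K:
  assumes "F \<in> compact_distrs"
  obtains K where "compact K" "emeasure F K = 1"
  using assms unfolding compact_distrs_def by auto

lemma distr_in_M:
  assumes F: "F \<in> compact_distrs" and f: "f \<in> borel_measurable borel"
    and K: "compact K" and K0: "K0 \<subseteq> f -` K" and E: "emeasure F K0 = 1"
  shows "distr F borel f \<in> compact_distrs"
proof -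
  have ps: "prob_space F" and s: "sets F = sets borel" and sp: "space F = UNIV"
    using M_D[OF F] by auto
  have fm: "f \<in> measurable F borel" using f by (simp add: measurable_cong_sets[OF s refl])
  have Kb: "K \<in> sets borel" using K by (simp add: compact_imp_closed borel_closed)
  have "emeasure (distr F borel f) K = emeasure F (f -` K)"
    using emeasure_distr[OF fm Kb] sp by simp
  moreover have "emeasure F (f -` K) \<ge> 1"
  proof -
    have "f -` K \<inter> space F \<in> sets F" by (rule measurable_sets[OF fm Kb])
    hence "f -` K \<in> sets F" using sp by simp
    hence "emeasure F K0 \<le> emeasure F (f -` K)" by (rule emeasure_mono[OF K0])
    then show ?thesis using E by simp
  qed
  moreover have "emeasure F (f -` K) \<le> 1"
    using prob_space.emeasure_le_1[OF ps] .
  ultimately have "emeasure (distr F borel f) K = 1" by auto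
  moreover have "prob_space (distr F borel f)"
    using prob_space.prob_space_distr[OF ps fm] .
  ultimately show ?thesis unfolding compact_distrs_def using K by auto
qed

lemma Tu_in_M:
  assumes F: "F \<in> compact_distrs" and u: "u \<in> FU"
  shows "Tu u F \<in> compact_distrs"
proof -
  obtain K where K: "compact K" "emeasure F K = 1" using M_K[OF F] by blast
  have c: "continuous_on UNIV u" using u by (simp add: FU_def)
  show ?thesis unfolding Tu_def
    apply (rule distr_in_M[OF F borel_measurable_continuous_onI[OF c], of "u ` K" K])
    using K compact_continuous_image[OF continuous_on_subset[OF c] K(1)] by auto
qed

lemma return_in_M: "return borel (x::real) \<in> compact_distrs"
  unfolding compact_distrs_def
  by (auto intro!: exI[of _ "{x}"] prob_space_return)

lemma Tu_return: "u \<in> FU \<Longrightarrow> Tu u (return borel x) = return borel (u x)"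
  unfolding Tu_def FU_def
  by (rule distr_return) (auto intro: borel_measurable_continuous_onI)

lemma M_bounds:
  assumes F: "F \<in> compact_distrs"
  obtains B where "\<And>x. x \<ge> B \<Longrightarrow> cdf F x = 1" "\<And>x. x < -B \<Longrightarrow> cdf F x = 0"
proof -
  obtain K where K: "compact K" "emeasure F K = 1" using M_K[OF F] by blast
  have ps: "prob_space F" and s: "sets F = sets borel" and sp: "space F = UNIV"
    using M_D[OF F] by auto
  obtain B where B: "\<forall>x\<in>K. \<bar>x\<bar> \<le> B" using compact_imp_bounded[OF K(1)] bounded_real by blast
  have Ks: "K \<in> sets F" using K s by (simp add: compact_imp_closed borel_closed)
  have mK: "measure F K = 1" using K(2) by (simp add: measure_def)
  show ?thesis
  proof
    fix x assume x: "x \<ge> B"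
    have "K \<subseteq> {..x}" using B x by force
    hence "measure F K \<le> measure F {..x}"
      using ps s by (intro finite_measure.finite_measure_mono) (auto simp: prob_space_def)
    moreover have "measure F {..x} \<le> 1" using prob_space.prob_le_1[OF ps] .
    ultimately show "cdf F x = 1" using mK unfolding cdf_def by simp
  next
    fix x assume x: "x < -B"
    have "{..x} \<subseteq> space F - K" using B x sp by force
    hence "measure F {..x} \<le> measure F (space F - K)"
      using ps s Ks by (intro finite_measure.finite_measure_mono) (auto simp: prob_space_def)
    also have "\<dots> = 0" using prob_space.prob_compl[OF ps Ks] mK by simp
    finally show "cdf F x = 0" unfolding cdf_def using measure_nonneg[of F "{..x}"] by linarith
  qed
qed

lemma cdf_mono_M:
  assumes F: "F \<in> compact_distrs" and "x \<le> y"
  shows "cdf F x \<le> cdf F y"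
  using M_D[OF F] assms(2) unfolding cdf_def
  by (intro finite_measure.finite_measure_mono) (auto simp: prob_space_def)

lemma cdf_01:
  assumes F: "F \<in> compact_distrs"
  shows "0 \<le> cdf F x" "cdf F x \<le> 1"
  using M_D[OF F] prob_space.prob_le_1 unfolding cdf_def by auto


lemma cdf_Tu:
  assumes F: "F \<in> compact_distrs" and u: "u \<in> FU"
  shows "cdf (Tu u F) x = measure F {y. u y \<le> x}"
proof -
  have s: "sets F = sets borel" and sp: "space F = UNIV" using M_D[OF F] by auto
  have um: "u \<in> measurable F borel"
    using u borel_measurable_continuous_onI measurable_cong_sets[OF s refl] by (auto simp: FU_def)
  have "measure (distr F borel u) {..x} = measure F (u -` {..x} \<inter> space F)"
    by (rule measure_distr[OF um]) simp
  also have "u -` {..x} \<inter> space F = {y. u y \<le> x}" using sp by auto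
  finally show ?thesis unfolding cdf_def Tu_def .
qed

lemma quant_comm:
  assumes F: "F \<in> compact_distrs" and u: "u \<in> FU"
    and Pup: "\<And>s t. s \<le> t \<Longrightarrow> P s \<Longrightarrow> P t" and P0: "\<not> P 0" and P1: "P 1"
  shows "Inf {x. P (cdf (Tu u F) x)} = u (Inf {x. P (cdf F x)})"
proof -
  define S where "S = {x. P (cdf F x)}"
  define S' where "S' = {x. P (cdf (Tu u F) x)}"
  define q where "q = Inf S"
  have ps: "prob_space F" and s: "sets F = sets borel" and sp: "space F = UNIV"
    using M_D[OF F] by auto
  have fm: "finite_measure F" using ps by (simp add: prob_space_def)
  have mono_u: "mono u" and cu: "continuous_on UNIV u" using u by (auto simp: FU_def)
  obtain B where B1: "\<And>x. x \<ge> B \<Longrightarrow> cdf F x = 1" and B0: "\<And>x. x < -B \<Longrightarrow> cdf F x = 0"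
    using M_bounds[OF F] by blast
  have Sne: "S \<noteq> {}" using B1[of B] P1 unfolding S_def by (metis empty_iff mem_Collect_eq order_refl)
  have Slow: "\<And>x. x \<in> S \<Longrightarrow> -B \<le> x"
  proof (rule ccontr)
    fix x assume "x \<in> S" "\<not> - B \<le> x"
    then show False using B0[of x] P0 by (auto simp: S_def)
  qed
  have Sbdd: "bdd_below S" using Slow by (auto simp: bdd_below_def)
  have a: "u q \<le> x" if x: "x \<in> S'" for x
  proof (rule ccontr)
    assume "\<not> u q \<le> x"
    hence xl: "x < u q" by simp
    define C where "C = {y. u y \<le> x}"
    have Px: "P (measure F C)" using x cdf_Tu[OF F u] by (simp add: S'_def C_def)
    have Clt: "y < q" if "y \<in> C" for y
    proof (rule ccontr)
      assume "\<not> y < q" hence "u q \<le> u y" using mono_u by (simp add: mono_def)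
      thus False using that xl by (simp add: C_def)
    qed
    show False
    proof (cases "C = {}")
      case True
      then show ?thesis using Px P0 by simp
    next
      case False
      have cl: "closed C" unfolding C_def by (rule closed_Collect_le[OF cu continuous_on_const])
      have bC: "bdd_above C" using Clt by (auto simp: bdd_above_def intro: less_imp_le)
      have y0: "Sup C \<in> C" by (rule closed_contains_Sup[OF False bC cl])
      have "C \<subseteq> {..Sup C}" using bC by (auto intro: cSup_upper)
      hence "measure F C \<le> cdf F (Sup C)" unfolding cdf_def
        using s by (intro finite_measure.finite_measure_mono[OF fm]) auto
      hence "Sup C \<in> S" using Pup Px by (auto simp: S_def)
      hence "q \<le> Sup C" unfolding q_def by (rule cInf_lower[OF _ Sbdd])
      thus False using Clt[OF y0] by simp
    qed
  qed
  have b: "u y \<in> S'" if y: "y > q" for y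
  proof -
    obtain s' where s': "s' \<in> S" "s' < y" using y Sne Sbdd cInf_less_iff unfolding q_def by blast
    have "closed {z. u z \<le> u y}" by (rule closed_Collect_le[OF cu continuous_on_const])
    hence mb: "{z. u z \<le> u y} \<in> sets borel" by (rule borel_closed)
    have c1: "cdf F s' \<le> cdf F y" using cdf_mono_M[OF F] s' by simp
    have c2: "cdf F y \<le> measure F {z. u z \<le> u y}" unfolding cdf_def
      using s mono_u mb by (intro finite_measure.finite_measure_mono[OF fm]) (auto simp: mono_def)
    have "P (cdf F s')" using s'(1) by (simp add: S_def)
    hence "P (measure F {z. u z \<le> u y})" using Pup c1 c2 by (meson order_trans)
    thus ?thesis using cdf_Tu[OF F u] by (simp add: S'_def)
  qed
  have S'ne: "S' \<noteq> {}" using b[of "q+1"] by auto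
  have S'bdd: "bdd_below S'" using a by (auto simp: bdd_below_def)
  have ge: "u q \<le> Inf S'" using a S'ne by (intro cInf_greatest) auto
  have le: "Inf S' \<le> u q"
  proof (rule ccontr)
    assume "\<not> Inf S' \<le> u q"
    hence e: "Inf S' - u q > 0" by simp
    obtain d where d: "d > 0" "\<And>x'. dist x' q < d \<Longrightarrow> dist (u x') (u q) < Inf S' - u q"
      using cu e unfolding continuous_on_iff by blast
    have "dist (u (q + d/2)) (u q) < Inf S' - u q" using d by (intro d(2)) (simp add: dist_real_def)
    hence "u (q + d/2) < Inf S'" by (simp add: dist_real_def)
    moreover have "Inf S' \<le> u (q + d/2)" using b[of "q + d/2"] d(1) S'bdd by (auto intro: cInf_lower)
    ultimately show False by simp
  qed
  show ?thesis using ge le by (simp add: S'_def S_def q_def)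
qed

lemma quantile_comm:
  assumes q: "is_quantile rh" and F: "F \<in> compact_distrs" and u: "u \<in> FU"
  shows "rh (Tu u F) = u (rh F)"
  using q unfolding is_quantile_def
proof (elim disjE bexE)
  fix p :: real assume p: "p \<in> {0<..1}" and h: "\<forall>F\<in>compact_distrs. rh F = qL p F"
  have "Inf {x. p \<le> cdf (Tu u F) x} = u (Inf {x. p \<le> cdf F x})"
    by (rule quant_comm[OF F u, of "\<lambda>s. p \<le> s"]) (use p in auto)
  thus ?thesis using h F Tu_in_M[OF F u] by (simp add: qL_def)
next
  fix p :: real assume p: "p \<in> {0..<1}" and h: "\<forall>F\<in>compact_distrs. rh F = qR p F"
  have "Inf {x. p < cdf (Tu u F) x} = u (Inf {x. p < cdf F x})"
    by (rule quant_comm[OF F u, of "\<lambda>s. p < s"]) (use p in auto)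
  thus ?thesis using h F Tu_in_M[OF F u] by (simp add: qR_def)
qed


definition ind :: "real \<Rightarrow> real measure \<Rightarrow> real measure" where
  "ind c F = distr F borel (\<lambda>y. if y \<le> c then 0 else 1)"

lemma ind_meas: "(\<lambda>y::real. if y \<le> c then 0 else (1::real)) \<in> borel_measurable borel"
  by measurable

lemma ind_in_M:
  assumes F: "F \<in> compact_distrs"
  shows "ind c F \<in> compact_distrs"
proof -
  have "emeasure F UNIV = 1"
    using M_D[OF F] prob_space.emeasure_space_1[of F] by simp
  show ?thesis unfolding ind_def
    by (rule distr_in_M[OF F ind_meas, of "{0..1}" UNIV]) (use \<open>emeasure F UNIV = 1\<close> in auto)
qed

lemma ind_emeasure:
  assumes F: "F \<in> compact_distrs" and A: "A \<in> sets borel"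
  shows "emeasure (ind c F) A =
    (if (0::real) \<in> A then ennreal (cdf F c) else 0) + (if (1::real) \<in> A then ennreal (1 - cdf F c) else 0)"
proof -
  have ps: "prob_space F" and s: "sets F = sets borel" and sp: "space F = UNIV"
    using M_D[OF F] by auto
  have fm: "finite_measure F" using ps by (simp add: prob_space_def)
  have m: "(\<lambda>y::real. if y \<le> c then 0 else (1::real)) \<in> measurable F borel"
    using ind_meas by (simp add: measurable_cong_sets[OF s refl])
  have e: "emeasure (ind c F) A = emeasure F ((\<lambda>y::real. if y \<le> c then 0 else (1::real)) -` A)"
    unfolding ind_def using emeasure_distr[OF m A] sp by simp
  have s1: "{..c} \<in> sets F" using s by simp
  have e1: "emeasure F {..c} = ennreal (cdf F c)"
    unfolding cdf_def by (rule finite_measure.emeasure_eq_measure[OF fm])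
  have "measure F (space F - {..c}) = 1 - measure F {..c}"
    by (rule prob_space.prob_compl[OF ps s1])
  hence "measure F {c<..} = 1 - cdf F c" using sp unfolding cdf_def
    by (metis Compl_atMost Compl_eq_Diff_UNIV)
  hence e2: "emeasure F {c<..} = ennreal (1 - cdf F c)"
    using finite_measure.emeasure_eq_measure[OF fm, of "{c<..}"] by simp
  have e3: "emeasure F UNIV = 1"
    using sp prob_space.emeasure_space_1[OF ps] by simp
  have c01: "0 \<le> cdf F c" "cdf F c \<le> 1" using cdf_01[OF F] by auto
  have "ennreal (cdf F c) + ennreal (1 - cdf F c) = 1"
    using c01 by (simp add: ennreal_plus[symmetric] del: ennreal_plus)
  hence e4: "emeasure F UNIV = ennreal (cdf F c) + ennreal (1 - cdf F c)" using e3 by simp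
  show ?thesis
  proof (cases "(0::real) \<in> A"; cases "(1::real) \<in> A")
    assume a: "(0::real) \<in> A" "(1::real) \<in> A"
    hence "(\<lambda>y::real. if y \<le> c then 0 else (1::real)) -` A = UNIV" by (auto split: if_splits)
    thus ?thesis using e e4 a by simp
  next
    assume a: "(0::real) \<in> A" "(1::real) \<notin> A"
    hence "(\<lambda>y::real. if y \<le> c then 0 else (1::real)) -` A = {..c}" by (auto split: if_splits)
    thus ?thesis using e e1 a by simp
  next
    assume a: "(0::real) \<notin> A" "(1::real) \<in> A"
    hence "(\<lambda>y::real. if y \<le> c then 0 else (1::real)) -` A = {c<..}" by (auto split: if_splits)
    thus ?thesis using e e2 a by simp
  next
    assume a: "(0::real) \<notin> A" "(1::real) \<notin> A"
    hence "(\<lambda>y::real. if y \<le> c then 0 else (1::real)) -` A = {}" by (auto split: if_splits)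
    thus ?thesis using e a by simp
  qed
qed

lemma ind_eq:
  assumes F: "F \<in> compact_distrs" and G: "G \<in> compact_distrs" and e: "cdf F c = cdf G d"
  shows "ind c F = ind d G"
proof (rule measure_eqI)
  show "sets (ind c F) = sets (ind d G)" by (simp add: ind_def)
  fix A assume "A \<in> sets (ind c F)"
  hence A: "A \<in> sets borel" by (simp add: ind_def)
  show "emeasure (ind c F) A = emeasure (ind d G) A"
    using ind_emeasure[OF F A, of c] ind_emeasure[OF G A, of d] e by simp
qed

definition Uni :: "real measure" where "Uni = uniform_measure lborel {0..1}"

lemma Uni_M: "Uni \<in> compact_distrs"
proof -
  have p: "prob_space Uni" unfolding Uni_def
    by (rule prob_space_uniform_measure) auto
  have "emeasure Uni {0..1} = 1" unfolding Uni_def by simp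
  thus ?thesis using p unfolding compact_distrs_def Uni_def
    by (auto intro!: exI[of _ "{0..1::real}"])
qed

lemma cdf_Uni: assumes "0 \<le> t" "t \<le> 1" shows "cdf Uni t = t"
proof -
  have "{0..1} \<inter> {..t} = {0..t::real}" using assms by auto
  hence "emeasure Uni {..t} = ennreal t / 1" unfolding Uni_def using assms by simp
  hence "emeasure Uni {..t} = ennreal t" by (simp add: divide_ennreal_def)
  thus ?thesis unfolding cdf_def measure_def using assms by (simp add: divide_ennreal_def)
qed

lemma FU_clamp_sq: "(\<lambda>y::real. (max 0 (min 1 y))^2) \<in> FU"
  unfolding FU_def
proof safe
  show "mono (\<lambda>y::real. (max 0 (min 1 y))^2)"
    by (rule monoI) (auto intro!: power_mono simp: max_def min_def)
  show "continuous_on UNIV (\<lambda>y::real. (max 0 (min 1 y))^2)"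
    by (intro continuous_intros)
qed

lemma ind_val:
  assumes comm: "\<And>u F. u \<in> FU \<Longrightarrow> F \<in> compact_distrs \<Longrightarrow> r (Tu u F) = u (r F)"
    and F: "F \<in> compact_distrs"
  shows "r (ind c F) = 0 \<or> r (ind c F) = 1"
proof -
  define w where "w = (\<lambda>y::real. (max 0 (min 1 y))^2)"
  have wF: "w \<in> FU" unfolding w_def by (rule FU_clamp_sq)
  have wm: "w \<in> measurable borel borel"
    using wF borel_measurable_continuous_onI by (auto simp: FU_def)
  have s: "sets F = sets borel" using M_D[OF F] by auto
  have m: "(\<lambda>y::real. if y \<le> c then 0 else (1::real)) \<in> measurable F borel"
    using ind_meas by (simp add: measurable_cong_sets[OF s refl])
  have "Tu w (ind c F) = distr F borel (w \<circ> (\<lambda>y::real. if y \<le> c then 0 else (1::real)))"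
    unfolding Tu_def ind_def by (rule distr_distr[OF wm m])
  also have "w \<circ> (\<lambda>y::real. if y \<le> c then 0 else (1::real)) = (\<lambda>y::real. if y \<le> c then 0 else (1::real))"
    by (auto simp: w_def fun_eq_iff)
  finally have "Tu w (ind c F) = ind c F" by (simp add: ind_def)
  moreover have "r (Tu w (ind c F)) = w (r (ind c F))" by (rule comm[OF wF ind_in_M[OF F]])
  ultimately have z: "r (ind c F) = w (r (ind c F))" by simp
  define z where "z = r (ind c F)"
  have "z = (max 0 (min 1 z))^2" using z by (simp add: z_def w_def)
  hence "z = 0 \<or> z = 1"
  proof -
    assume h: "z = (max 0 (min 1 z))^2"
    show ?thesis
    proof (cases "z < 0")
      case True thus ?thesis using h by simp
    next
      case False
      show ?thesis
      proof (cases "z > 1")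
        case True thus ?thesis using h by simp
      next
        case False2: False
        hence "z = z^2" using h False by (simp add: max_def min_def)
        hence "z * (z - 1) = 0" by (simp add: algebra_simps power2_eq_square)
        thus ?thesis by simp
      qed
    qed
  qed
  thus ?thesis by (simp add: z_def)
qed


lemma key:
  assumes comm: "\<And>u F. u \<in> FU \<Longrightarrow> F \<in> compact_distrs \<Longrightarrow> r (Tu u F) = u (r F)"
    and F: "F \<in> compact_distrs"
  shows "r (ind c F) = 0 \<Longrightarrow> r F \<le> c" and "r (ind c F) = 1 \<Longrightarrow> c \<le> r F"
proof -
  define phi where "phi = (\<lambda>y::real. if y \<le> c then y else y + 1)"
  define H where "H = distr F borel phi"
  define u0 where "u0 = (\<lambda>y::real. min y c + max 0 (y - c - 1))"
  define v0 where "v0 = (\<lambda>y::real. max 0 (min 1 (y - c)))"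
  have s: "sets F = sets borel" using M_D[OF F] by auto
  have phib: "phi \<in> borel_measurable borel" unfolding phi_def by measurable
  have phim: "phi \<in> measurable F borel" using phib by (simp add: measurable_cong_sets[OF s refl])
  have HM: "H \<in> compact_distrs"
  proof -
    obtain K where K: "compact K" "emeasure F K = 1" using M_K[OF F] by blast
    obtain B where B: "\<forall>x\<in>K. \<bar>x\<bar> \<le> B" using compact_imp_bounded[OF K(1)] bounded_real by blast
    have "K \<subseteq> phi -` {-B..B+1}" using B by (force simp: phi_def)
    then show ?thesis unfolding H_def
      by (intro distr_in_M[OF F phib _ _ K(2)]) auto
  qed
  have u0F: "u0 \<in> FU" unfolding FU_def u0_def
  proof safe
    show "mono (\<lambda>y::real. min y c + max 0 (y - c - 1))"
      by (rule monoI) (auto simp: max_def min_def)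
    show "continuous_on UNIV (\<lambda>y::real. min y c + max 0 (y - c - 1))"
      by (intro continuous_intros)
  qed
  have v0F: "v0 \<in> FU" unfolding FU_def v0_def
  proof safe
    show "mono (\<lambda>y::real. max 0 (min 1 (y - c)))"
      by (rule monoI) (auto simp: max_def min_def)
    show "continuous_on UNIV (\<lambda>y::real. max 0 (min 1 (y - c)))"
      by (intro continuous_intros)
  qed
  have u0m: "u0 \<in> measurable borel borel" using u0F borel_measurable_continuous_onI by (auto simp: FU_def)
  have v0m: "v0 \<in> measurable borel borel" using v0F borel_measurable_continuous_onI by (auto simp: FU_def)
  have "Tu u0 H = distr F borel (u0 \<circ> phi)" unfolding Tu_def H_def by (rule distr_distr[OF u0m phim])
  also have "u0 \<circ> phi = (\<lambda>x. x)" by (auto simp: fun_eq_iff u0_def phi_def)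
  also have "distr F borel (\<lambda>x. x) = F" using s by (intro distr_id2) simp
  finally have TuH: "Tu u0 H = F" .
  have "Tu v0 H = distr F borel (v0 \<circ> phi)" unfolding Tu_def H_def by (rule distr_distr[OF v0m phim])
  also have "v0 \<circ> phi = (\<lambda>y::real. if y \<le> c then 0 else 1)" by (auto simp: fun_eq_iff v0_def phi_def)
  finally have TvH: "Tu v0 H = ind c F" by (simp add: ind_def)
  have e1: "r F = u0 (r H)" using comm[OF u0F HM] TuH by simp
  have e2: "r (ind c F) = v0 (r H)" using comm[OF v0F HM] TvH by simp
  show "r (ind c F) = 0 \<Longrightarrow> r F \<le> c"
    using e1 e2 by (auto simp: u0_def v0_def max_def min_def split: if_splits)
  show "r (ind c F) = 1 \<Longrightarrow> c \<le> r F"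
    using e1 e2 by (auto simp: u0_def v0_def max_def min_def split: if_splits)
qed

lemma core:
  assumes comm: "\<And>u F. u \<in> FU \<Longrightarrow> F \<in> compact_distrs \<Longrightarrow> r (Tu u F) = u (r F)"
  shows "is_quantile r"
proof -
  define sig where "sig = (\<lambda>t. r (ind t Uni))"
  have sig01: "sig t = 0 \<or> sig t = 1" for t
    unfolding sig_def by (rule ind_val[OF comm Uni_M])
  have lev: "r (ind c F) = sig (cdf F c)" if F: "F \<in> compact_distrs" for F c
  proof -
    have "cdf Uni (cdf F c) = cdf F c" using cdf_01[OF F] by (intro cdf_Uni) auto
    hence "ind c F = ind (cdf F c) Uni" using ind_eq[OF F Uni_M] by metis
    thus ?thesis by (simp add: sig_def)
  qed
  have K0: "sig (cdf F c) = 0 \<Longrightarrow> r F \<le> c" if F: "F \<in> compact_distrs" for F c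
    using key(1)[OF comm F, of c] lev[OF F] by simp
  have K1: "sig (cdf F c) = 1 \<Longrightarrow> c \<le> r F" if F: "F \<in> compact_distrs" for F c
    using key(2)[OF comm F, of c] lev[OF F] by simp
  have sigmono: "sig t' = 0" if "0 \<le> t" "t < t'" "t' \<le> 1" "sig t = 0" for t t'
  proof (rule ccontr)
    assume "sig t' \<noteq> 0" hence "sig t' = 1" using sig01 by blast
    hence "t' \<le> r Uni" using K1[OF Uni_M, of t'] cdf_Uni[of t'] that by simp
    moreover have "r Uni \<le> t" using K0[OF Uni_M, of t] cdf_Uni[of t] that by simp
    ultimately show False using that by simp
  qed
  have sig1: "sig 1 = 0"
  proof -
    define t where "t = cdf Uni (r Uni + 1)"
    have t01: "0 \<le> t" "t \<le> 1" using cdf_01[OF Uni_M] by (auto simp: t_def)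
    have "sig t \<noteq> 1" using K1[OF Uni_M, of "r Uni + 1"] by (auto simp: t_def)
    hence st: "sig t = 0" using sig01 by blast
    show ?thesis
    proof (cases "t = 1")
      case True thus ?thesis using st by simp
    next
      case False thus ?thesis using sigmono[of t 1] st t01 by simp
    qed
  qed
  have sig0: "sig 0 = 1"
  proof -
    define t where "t = cdf Uni (r Uni - 1)"
    have t01: "0 \<le> t" "t \<le> 1" using cdf_01[OF Uni_M] by (auto simp: t_def)
    have "sig t \<noteq> 0" using K0[OF Uni_M, of "r Uni - 1"] by (auto simp: t_def)
    hence st: "sig t = 1" using sig01 by blast
    show ?thesis
    proof (cases "t = 0")
      case True thus ?thesis using st by simp
    next
      case False
      hence "sig 0 \<noteq> 0" using sigmono[of 0 t] st t01 by auto
      thus ?thesis using sig01 by blast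
    qed
  qed
  define S where "S = {t\<in>{0..1}. sig t = 0}"
  define ts where "ts = Inf S"
  have Sne: "S \<noteq> {}" and one: "1 \<in> S" using sig1 by (auto simp: S_def)
  have Sbdd: "bdd_below S" by (auto simp: S_def bdd_below_def)
  have ts01: "0 \<le> ts" "ts \<le> 1"
    using one Sbdd Sne by (auto simp: ts_def S_def intro: cInf_lower cInf_greatest)
  have below: "sig t = 1" if "0 \<le> t" "t < ts" for t
  proof -
    have "t \<notin> S" using that cInf_lower[OF _ Sbdd, of t] by (auto simp: ts_def)
    hence "sig t \<noteq> 0" using that ts01 by (auto simp: S_def)
    thus ?thesis using sig01 by blast
  qed
  have above: "sig t = 0" if "ts < t" "t \<le> 1" for t
  proof -
    have "Inf S < t" using that(1) by (simp add: ts_def)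
    then obtain s where s: "s \<in> S" "s < t" using cInf_less_iff[OF Sne Sbdd] by blast
    thus ?thesis using sigmono[of s t] that by (auto simp: S_def)
  qed
  have gen: "r F = Inf {x. P (cdf F x)}"
    if Pup: "\<And>s t. s \<le> t \<Longrightarrow> P s \<Longrightarrow> P t" and P0: "\<not> P 0" and P1: "P 1"
      and Psig: "\<And>t. 0 \<le> t \<Longrightarrow> t \<le> 1 \<Longrightarrow> (sig t = 0 \<longleftrightarrow> P t)"
      and F: "F \<in> compact_distrs" for P F
  proof -
    define Sx where "Sx = {x. P (cdf F x)}"
    obtain B where B1: "\<And>x. x \<ge> B \<Longrightarrow> cdf F x = 1" and B0: "\<And>x. x < -B \<Longrightarrow> cdf F x = 0"
      using M_bounds[OF F] by blast
    have Sxne: "Sx \<noteq> {}" using B1[of B] P1 unfolding Sx_def by (metis empty_iff mem_Collect_eq order_refl)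
    have Slow: "\<And>x. x \<in> Sx \<Longrightarrow> -B \<le> x"
    proof (rule ccontr)
      fix x assume "x \<in> Sx" "\<not> - B \<le> x"
      then show False using B0[of x] P0 by (auto simp: Sx_def)
    qed
    have Sxbdd: "bdd_below Sx" using Slow by (auto simp: bdd_below_def)
    have "Inf Sx \<le> r F"
    proof (rule dense_le)
      fix c assume c: "c < Inf Sx"
      have "c \<notin> Sx" using c cInf_lower[OF _ Sxbdd, of c] by auto
      hence "\<not> P (cdf F c)" by (simp add: Sx_def)
      hence "sig (cdf F c) \<noteq> 0" using Psig cdf_01[OF F] by blast
      hence "sig (cdf F c) = 1" using sig01 by blast
      thus "c \<le> r F" by (rule K1[OF F])
    qed
    moreover have "r F \<le> Inf Sx"
    proof (rule dense_ge)
      fix c assume c: "Inf Sx < c"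
      obtain x where x: "x \<in> Sx" "x < c" using cInf_less_iff[OF Sxne Sxbdd] c by auto
      have "cdf F x \<le> cdf F c" using cdf_mono_M[OF F] x by simp
      hence "P (cdf F c)" using Pup x by (auto simp: Sx_def)
      hence "sig (cdf F c) = 0" using Psig cdf_01[OF F] by blast
      thus "r F \<le> c" by (rule K0[OF F])
    qed
    ultimately show ?thesis by (simp add: Sx_def)
  qed
  show ?thesis
  proof (cases "sig ts = 0")
    case True
    have tpos: "ts > 0" using True sig0 ts01 by (cases "ts = 0") auto
    have Psig: "sig t = 0 \<longleftrightarrow> ts \<le> t" if "0 \<le> t" "t \<le> 1" for t
      using below[of t] above[of t] True that by (cases t ts rule: linorder_cases) auto
    have "\<forall>F\<in>compact_distrs. r F = qL ts F"
      unfolding qL_def using tpos ts01 Psig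
      by (intro ballI gen[where P = "\<lambda>s. ts \<le> s"]) auto
    thus ?thesis unfolding is_quantile_def using tpos ts01 by auto
  next
    case False
    hence F1: "sig ts = 1" using sig01 by blast
    have tl: "ts < 1" using F1 sig1 ts01 by (cases "ts = 1") auto
    have Psig: "sig t = 0 \<longleftrightarrow> ts < t" if "0 \<le> t" "t \<le> 1" for t
      using below[of t] above[of t] F1 that by (cases t ts rule: linorder_cases) auto
    have "\<forall>F\<in>compact_distrs. r F = qR ts F"
      unfolding qR_def using tl ts01 Psig
      by (intro ballI gen[where P = "\<lambda>s. ts < s"]) auto
    thus ?thesis unfolding is_quantile_def using tl ts01 by auto
  qed
qed


lemma smono_le:
  fixes f :: "real \<Rightarrow> real"
  assumes sm: "\<forall>x y. x < y \<longrightarrow> f x < f y" and xy: "x \<le> y"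
  shows "f x \<le> f y"
proof (cases "x = y")
  case False hence "x < y" using xy by simp
  thus ?thesis using sm by (simp add: less_imp_le)
qed simp

lemma smono_cont:
  fixes f :: "real \<Rightarrow> real"
  assumes sm: "\<forall>x y. x < y \<longrightarrow> f x < f y" and s: "surj f"
  shows "continuous_on UNIV f"
  unfolding continuous_on_iff
proof (intro ballI allI impI)
  fix x :: real and e :: real assume e: "0 < e"
  obtain a where a: "f x - e = f a" using s by (metis surjD)
  obtain b where b: "f x + e = f b" using s by (metis surjD)
  have ax: "a < x"
  proof (rule ccontr)
    assume "\<not> a < x" hence "x \<le> a" by simp
    hence "f x \<le> f a" by (rule smono_le[OF sm])
    thus False using a e by simp
  qed
  have xb: "x < b"
  proof (rule ccontr)
    assume "\<not> x < b" hence "b \<le> x" by simp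
    hence "f b \<le> f x" by (rule smono_le[OF sm])
    thus False using b e by simp
  qed
  show "\<exists>d>0. \<forall>x'\<in>UNIV. dist x' x < d \<longrightarrow> dist (f x') (f x) < e"
  proof (intro exI[of _ "min (x - a) (b - x)"] conjI ballI impI)
    show "0 < min (x - a) (b - x)" using ax xb by simp
    fix x' assume "dist x' x < min (x - a) (b - x)"
    hence "a < x'" "x' < b" by (auto simp: dist_real_def)
    hence "f a < f x'" "f x' < f b" using sm by auto
    thus "dist (f x') (f x) < e" using a b by (simp add: dist_real_def abs_less_iff)
  qed
qed


lemma sinc_inj: assumes "\<forall>x y. x < y \<longrightarrow> h x < (h y::real)" shows "inj (h::real \<Rightarrow> real)"
proof (rule injI)
  fix x y assume e: "h x = h y"
  show "x = y"
  proof (rule ccontr)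
    assume "x \<noteq> y"
    then consider (a) "x < y" | (b) "y < x" by linarith
    thus False
    proof cases
      case a
      have "h x < h y \<or> h y < h x" using assms a by blast
      thus False using e by simp
    next
      case b
      have "h y < h x \<or> h x < h y" using assms b by blast
      thus False using e by simp
    qed
  qed
qed

lemma sdec_inj: assumes "\<forall>x y. x < y \<longrightarrow> h y < (h x::real)" shows "inj (h::real \<Rightarrow> real)"
proof (rule injI)
  fix x y assume e: "h x = h y"
  show "x = y"
  proof (rule ccontr)
    assume "x \<noteq> y"
    then consider (a) "x < y" | (b) "y < x" by linarith
    thus False
    proof cases
      case a
      have "h x < h y \<or> h y < h x" using assms a by blast
      thus False using e by simp
    next
      case b
      have "h y < h x \<or> h x < h y" using assms b by blast
      thus False using e by simp
    qed
  qed
qed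

lemma sdec_cont:
  fixes h :: "real \<Rightarrow> real"
  assumes sm: "\<forall>x y. x < y \<longrightarrow> h y < h x" and s: "surj h"
  shows "continuous_on UNIV h"
proof -
  have "surj (\<lambda>x. - h x)" unfolding surj_def
  proof
    fix y :: real
    obtain x where "- y = h x" using surjD[OF s, of "- y"] by (elim exE)
    thus "\<exists>x. y = - h x" by (intro exI[of _ x]) simp
  qed
  moreover have "\<forall>x y. x < y \<longrightarrow> - h x < - h y" using sm by simp
  ultimately have "continuous_on UNIV (\<lambda>x. - h x)" by (intro smono_cont)
  hence "continuous_on UNIV (\<lambda>x. - (- h x))" by (rule continuous_on_minus)
  thus ?thesis by simp
qed

lemma inv_props:
  fixes h :: "real \<Rightarrow> real"
  assumes i: "inj h" and s: "surj h"
  shows "\<And>y. h (inv h y) = y" "\<And>x. inv h (h x) = x" "surj (inv h)"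
proof -
  show e1: "\<And>y. h (inv h y) = y" by (rule surj_f_inv_f[OF s])
  show e2: "\<And>x. inv h (h x) = x" by (rule inv_f_f[OF i])
  show "surj (inv h)" by (rule surjI[where f = h]) (rule e2)
qed

lemma inv_inc:
  fixes h :: "real \<Rightarrow> real"
  assumes sm: "\<forall>x y. x < y \<longrightarrow> h x < h y" and s: "surj h"
  shows "\<forall>x y. x < y \<longrightarrow> inv h x < inv h y"
proof (intro allI impI)
  fix x y :: real assume xy: "x < y"
  have e1: "\<And>y. h (inv h y) = y" using inv_props[OF sinc_inj[OF sm] s] by blast
  show "inv h x < inv h y"
  proof (rule ccontr)
    assume "\<not> inv h x < inv h y"
    hence "inv h y \<le> inv h x" by simp
    hence "h (inv h y) \<le> h (inv h x)" by (rule smono_le[OF sm])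
    thus False using xy e1 by simp
  qed
qed

lemma inv_dec:
  fixes h :: "real \<Rightarrow> real"
  assumes sm: "\<forall>x y. x < y \<longrightarrow> h y < h x" and s: "surj h"
  shows "\<forall>x y. x < y \<longrightarrow> inv h y < inv h x"
proof (intro allI impI)
  fix x y :: real assume xy: "x < y"
  have e1: "\<And>y. h (inv h y) = y" using inv_props[OF sdec_inj[OF sm] s] by blast
  have sm': "\<forall>x y. x < y \<longrightarrow> - h x < - h y" using sm by simp
  show "inv h y < inv h x"
  proof (rule ccontr)
    assume "\<not> inv h y < inv h x"
    hence "inv h x \<le> inv h y" by simp
    hence "- h (inv h x) \<le> - h (inv h y)" by (rule smono_le[OF sm'])
    thus False using xy e1 by simp
  qed
qed

lemma cont_comp: "continuous_on UNIV f \<Longrightarrow> continuous_on UNIV g \<Longrightarrow> continuous_on UNIV (\<lambda>x. f (g x))"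
  by (rule continuous_on_compose2[of UNIV f UNIV g]) auto

lemma conj_FU:
  fixes h k :: "real \<Rightarrow> real"
  assumes hk: "(\<forall>x y. x < y \<longrightarrow> h x < h y) \<and> (\<forall>x y. x < y \<longrightarrow> k x < k y) \<or>
               (\<forall>x y. x < y \<longrightarrow> h y < h x) \<and> (\<forall>x y. x < y \<longrightarrow> k y < k x)"
    and ch: "continuous_on UNIV h" and ck: "continuous_on UNIV k" and u: "u \<in> FU"
  shows "(\<lambda>y. h (u (k y))) \<in> FU"
proof -
  have cu: "continuous_on UNIV u" using u by (simp add: FU_def)
  have c: "continuous_on UNIV (\<lambda>y. h (u (k y)))"
    by (rule cont_comp[OF ch cont_comp[OF cu ck]])
  have mu: "\<And>a b. a \<le> b \<Longrightarrow> u a \<le> u b" using u unfolding FU_def mono_def by blast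
  have m: "mono (\<lambda>y. h (u (k y)))"
  proof (rule monoI)
    fix a b :: real assume ab: "a \<le> b"
    from hk show "h (u (k a)) \<le> h (u (k b))"
    proof
      assume H: "(\<forall>x y. x < y \<longrightarrow> h x < h y) \<and> (\<forall>x y. x < y \<longrightarrow> k x < k y)"
      have "k a \<le> k b" by (rule smono_le[OF conjunct2[OF H] ab])
      hence "u (k a) \<le> u (k b)" by (rule mu)
      thus ?thesis by (rule smono_le[OF conjunct1[OF H]])
    next
      assume H: "(\<forall>x y. x < y \<longrightarrow> h y < h x) \<and> (\<forall>x y. x < y \<longrightarrow> k y < k x)"
      have H1: "\<forall>x y. x < y \<longrightarrow> - h x < - h y" using conjunct1[OF H] by simp
      have H2: "\<forall>x y. x < y \<longrightarrow> - k x < - k y" using conjunct2[OF H] by simp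
      have "- k a \<le> - k b" by (rule smono_le[OF H2 ab])
      hence "k b \<le> k a" by simp
      hence "u (k b) \<le> u (k a)" by (rule mu)
      hence "- h (u (k b)) \<le> - h (u (k a))" by (rule smono_le[OF H1])
      thus ?thesis by simp
    qed
  qed
  show ?thesis using c m by (simp add: FU_def)
qed


lemma restr_eq: "((\<lambda>F\<in>X. a F) = (\<lambda>F\<in>X. b F)) \<longleftrightarrow> (\<forall>F\<in>X. a F = b F)"
proof
  assume e: "(\<lambda>F\<in>X. a F) = (\<lambda>F\<in>X. b F)"
  show "\<forall>F\<in>X. a F = b F"
  proof
    fix F assume F: "F \<in> X"
    have "(\<lambda>F\<in>X. a F) F = (\<lambda>F\<in>X. b F) F" using e by (rule arg_cong)
    thus "a F = b F" using F by simp
  qed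
next
  assume "\<forall>F\<in>X. a F = b F"
  thus "(\<lambda>F\<in>X. a F) = (\<lambda>F\<in>X. b F)" by (intro restrict_ext) simp
qed

lemma set_eq_AB:
  fixes \<rho> :: "real measure \<Rightarrow> real"
  shows "({(\<lambda>F\<in>compact_distrs. u (\<rho> F)) | u. u \<in> FU}
           = {(\<lambda>F\<in>compact_distrs. \<rho> (Tu u F)) | u. u \<in> FU})
   \<longleftrightarrow> ((\<forall>u\<in>FU. \<exists>v\<in>FU. \<forall>F\<in>compact_distrs. u (\<rho> F) = \<rho> (Tu v F)) \<and>
        (\<forall>v\<in>FU. \<exists>u\<in>FU. \<forall>F\<in>compact_distrs. \<rho> (Tu v F) = u (\<rho> F)))"
  (is "?L = ?R \<longleftrightarrow> ?A \<and> ?B")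
proof
  assume e: "?L = ?R"
  show "?A \<and> ?B"
  proof
    show ?A
    proof
      fix u assume u: "u \<in> FU"
      have "(\<lambda>F\<in>compact_distrs. u (\<rho> F)) \<in> ?L" using u by blast
      hence "(\<lambda>F\<in>compact_distrs. u (\<rho> F)) \<in> ?R" using e by simp
      then obtain v where v: "v \<in> FU" "(\<lambda>F\<in>compact_distrs. u (\<rho> F)) = (\<lambda>F\<in>compact_distrs. \<rho> (Tu v F))"
        by blast
      have "\<forall>F\<in>compact_distrs. u (\<rho> F) = \<rho> (Tu v F)" by (rule iffD1[OF restr_eq v(2)])
      thus "\<exists>v\<in>FU. \<forall>F\<in>compact_distrs. u (\<rho> F) = \<rho> (Tu v F)" using v(1) by blast
    qed
    show ?B
    proof
      fix v assume v: "v \<in> FU"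
      have "(\<lambda>F\<in>compact_distrs. \<rho> (Tu v F)) \<in> ?R" using v by blast
      hence "(\<lambda>F\<in>compact_distrs. \<rho> (Tu v F)) \<in> ?L" using e by simp
      then obtain u where u: "u \<in> FU" "(\<lambda>F\<in>compact_distrs. \<rho> (Tu v F)) = (\<lambda>F\<in>compact_distrs. u (\<rho> F))"
        by blast
      have "\<forall>F\<in>compact_distrs. \<rho> (Tu v F) = u (\<rho> F)" by (rule iffD1[OF restr_eq u(2)])
      thus "\<exists>u\<in>FU. \<forall>F\<in>compact_distrs. \<rho> (Tu v F) = u (\<rho> F)" using u(1) by blast
    qed
  qed
next
  assume AB: "?A \<and> ?B"
  show "?L = ?R"
  proof
    show "?L \<subseteq> ?R"
    proof
      fix f assume "f \<in> ?L"
      then obtain u where u: "u \<in> FU" "f = (\<lambda>F\<in>compact_distrs. u (\<rho> F))" by blast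
      obtain v where v: "v \<in> FU" "\<forall>F\<in>compact_distrs. u (\<rho> F) = \<rho> (Tu v F)" using AB u(1) by blast
      have "(\<lambda>F\<in>compact_distrs. u (\<rho> F)) = (\<lambda>F\<in>compact_distrs. \<rho> (Tu v F))"
        by (rule iffD2[OF restr_eq v(2)])
      hence "f = (\<lambda>F\<in>compact_distrs. \<rho> (Tu v F))" using u(2) by simp
      thus "f \<in> ?R" using v(1) by blast
    qed
    show "?R \<subseteq> ?L"
    proof
      fix f assume "f \<in> ?R"
      then obtain v where v: "v \<in> FU" "f = (\<lambda>F\<in>compact_distrs. \<rho> (Tu v F))" by blast
      obtain u where u: "u \<in> FU" "\<forall>F\<in>compact_distrs. \<rho> (Tu v F) = u (\<rho> F)" using AB v(1) by blast
      have "(\<lambda>F\<in>compact_distrs. \<rho> (Tu v F)) = (\<lambda>F\<in>compact_distrs. u (\<rho> F))"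
        by (rule iffD2[OF restr_eq u(2)])
      hence "f = (\<lambda>F\<in>compact_distrs. u (\<rho> F))" using v(2) by simp
      thus "f \<in> ?L" using u(1) by blast
    qed
  qed
qed


lemma dir_if:
  fixes \<rho> :: "real measure \<Rightarrow> real"
  assumes hs: "(\<forall>x y. x < y \<longrightarrow> h x < h y) \<or> (\<forall>x y. x < y \<longrightarrow> h y < h x)"
    and ch: "continuous_on UNIV h" and sh: "surj h" and q: "is_quantile rh"
    and e: "\<forall>F\<in>compact_distrs. \<rho> F = h (rh F)"
  shows "(\<forall>u\<in>FU. \<exists>v\<in>FU. \<forall>F\<in>compact_distrs. u (\<rho> F) = \<rho> (Tu v F)) \<and>
        (\<forall>v\<in>FU. \<exists>u\<in>FU. \<forall>F\<in>compact_distrs. \<rho> (Tu v F) = u (\<rho> F))"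
proof -
  have ih: "inj h" using hs sinc_inj sdec_inj by blast
  define hi where "hi = inv h"
  have e1: "\<And>y. h (hi y) = y" and e2: "\<And>x. hi (h x) = x" and shi: "surj hi"
    using inv_props[OF ih sh] by (auto simp: hi_def)
  have hs2: "(\<forall>x y. x < y \<longrightarrow> h x < h y) \<and> (\<forall>x y. x < y \<longrightarrow> hi x < hi y) \<or>
             (\<forall>x y. x < y \<longrightarrow> h y < h x) \<and> (\<forall>x y. x < y \<longrightarrow> hi y < hi x)"
    using hs inv_inc[OF _ sh] inv_dec[OF _ sh] unfolding hi_def by blast
  have hs3: "(\<forall>x y. x < y \<longrightarrow> hi x < hi y) \<and> (\<forall>x y. x < y \<longrightarrow> h x < h y) \<or>
             (\<forall>x y. x < y \<longrightarrow> hi y < hi x) \<and> (\<forall>x y. x < y \<longrightarrow> h y < h x)"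
    using hs2 by blast
  have chi: "continuous_on UNIV hi"
    using hs2 smono_cont[OF _ shi] sdec_cont[OF _ shi] by blast
  show ?thesis
  proof
    show "\<forall>u\<in>FU. \<exists>v\<in>FU. \<forall>F\<in>compact_distrs. u (\<rho> F) = \<rho> (Tu v F)"
    proof
      fix u assume u: "u \<in> FU"
      define v where "v = (\<lambda>y. hi (u (h y)))"
      have vF: "v \<in> FU" unfolding v_def by (rule conj_FU[OF hs3 chi ch u])
      have "u (\<rho> F) = \<rho> (Tu v F)" if F: "F \<in> compact_distrs" for F
      proof -
        have "\<rho> (Tu v F) = h (rh (Tu v F))" using e Tu_in_M[OF F vF] by blast
        also have "rh (Tu v F) = v (rh F)" by (rule quantile_comm[OF q F vF])
        also have "h (v (rh F)) = u (h (rh F))" by (simp add: v_def e1)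
        also have "h (rh F) = \<rho> F" using e F by simp
        finally show ?thesis by simp
      qed
      thus "\<exists>v\<in>FU. \<forall>F\<in>compact_distrs. u (\<rho> F) = \<rho> (Tu v F)" using vF by blast
    qed
    show "\<forall>v\<in>FU. \<exists>u\<in>FU. \<forall>F\<in>compact_distrs. \<rho> (Tu v F) = u (\<rho> F)"
    proof
      fix v assume v: "v \<in> FU"
      define u where "u = (\<lambda>y. h (v (hi y)))"
      have uF: "u \<in> FU" unfolding u_def by (rule conj_FU[OF hs2 ch chi v])
      have "\<rho> (Tu v F) = u (\<rho> F)" if F: "F \<in> compact_distrs" for F
      proof -
        have "\<rho> (Tu v F) = h (rh (Tu v F))" using e Tu_in_M[OF F v] by blast
        also have "rh (Tu v F) = v (rh F)" by (rule quantile_comm[OF q F v])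
        also have "h (v (rh F)) = u (h (rh F))" by (simp add: u_def e2)
        also have "h (rh F) = \<rho> F" using e F by simp
        finally show ?thesis .
      qed
      thus "\<exists>u\<in>FU. \<forall>F\<in>compact_distrs. \<rho> (Tu v F) = u (\<rho> F)" using uF by blast
    qed
  qed
qed


lemma dir_only:
  fixes \<rho> :: "real measure \<Rightarrow> real"
  assumes A: "\<forall>u\<in>FU. \<exists>v\<in>FU. \<forall>F\<in>compact_distrs. u (\<rho> F) = \<rho> (Tu v F)"
    and B: "\<forall>v\<in>FU. \<exists>u\<in>FU. \<forall>F\<in>compact_distrs. \<rho> (Tu v F) = u (\<rho> F)"
  shows "\<exists>h rh. ((\<forall>x y. x < y \<longrightarrow> h x < h y) \<or> (\<forall>x y. x < y \<longrightarrow> h y < h x))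
               \<and> continuous_on UNIV h \<and> surj h
               \<and> is_quantile rh
               \<and> (\<forall>F\<in>compact_distrs. \<rho> F = h (rh F))"
proof -
  define g where "g = (\<lambda>x. \<rho> (return borel x))"
  have Bd: "\<exists>u\<in>FU. \<forall>x. g (v x) = u (g x)" if v: "v \<in> FU" for v
  proof -
    obtain u where u: "u \<in> FU" "\<forall>F\<in>compact_distrs. \<rho> (Tu v F) = u (\<rho> F)" using B v by blast
    have "g (v x) = u (g x)" for x
      using u(2)[rule_format, OF return_in_M[of x]] Tu_return[OF v, of x] by (simp add: g_def)
    thus ?thesis using u(1) by blast
  qed
  have sg: "surj g" unfolding surj_def
  proof
    fix a :: real
    have cF: "(\<lambda>_. a) \<in> FU" unfolding FU_def by (auto intro: monoI)
    obtain v where v: "v \<in> FU" "\<forall>F\<in>compact_distrs. a = \<rho> (Tu v F)" using bspec[OF A cF] by auto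
    have "a = g (v 0)" using v(2)[rule_format, OF return_in_M[of 0]] Tu_return[OF v(1), of 0] by (simp add: g_def)
    thus "\<exists>x. a = g x" by blast
  qed
  have gconst: False if xy: "x < y" and e: "g x = g y" for x y
  proof -
    have all: "g a = g b" if ab: "a < b" for a b
    proof -
      define v where "v = (\<lambda>t. a + (t - x) * ((b - a) / (y - x)))"
      have cpos: "(b - a) / (y - x) \<ge> 0" using ab xy by simp
      have vF: "v \<in> FU" unfolding FU_def v_def
      proof safe
        show "mono (\<lambda>t. a + (t - x) * ((b - a) / (y - x)))"
        proof (rule monoI)
          fix s t :: real assume "s \<le> t"
          hence "(s - x) * ((b - a) / (y - x)) \<le> (t - x) * ((b - a) / (y - x))"
            using cpos by (intro mult_right_mono) auto
          thus "a + (s - x) * ((b - a) / (y - x)) \<le> a + (t - x) * ((b - a) / (y - x))" by simp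
        qed
        show "continuous_on UNIV (\<lambda>t. a + (t - x) * ((b - a) / (y - x)))"
          by (intro continuous_intros)
      qed
      have vx: "v x = a" by (simp add: v_def)
      have vy: "v y = b" using xy by (simp add: v_def field_simps)
      obtain u where u: "\<forall>t. g (v t) = u (g t)" using Bd[OF vF] by blast
      have "g a = u (g x)" using u vx by metis
      also have "\<dots> = u (g y)" using e by simp
      also have "\<dots> = g b" using u vy by metis
      finally show ?thesis .
    qed
    obtain z where z: "g 0 + 1 = g z" using sg surjD by metis
    show False
    proof (cases "z < 0")
      case True thus False using all[OF True] z by simp
    next
      case False
      hence "0 < z \<or> z = 0" by linarith
      thus False using all[of 0 z] z by auto
    qed
  qed
  have ginj: "g x \<noteq> g y" if "x \<noteq> y" for x y
  proof
    assume e: "g x = g y"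
    from that consider "x < y" | "y < x" by linarith
    thus False
    proof cases
      case 1 thus False using gconst e by blast
    next
      case 2 thus False using gconst e by metis
    qed
  qed
  have bt: "(g x < g y \<and> g y < g z) \<or> (g y < g x \<and> g z < g y)" if xyz: "x < y" "y < z" for x y z
  proof -
    define v1 where "v1 = (\<lambda>t::real. max x (min y t))"
    define v2 where "v2 = (\<lambda>t::real. max y (min z t))"
    have v1F: "v1 \<in> FU" unfolding FU_def v1_def
    proof safe
      show "mono (\<lambda>t::real. max x (min y t))" by (rule monoI) (auto simp: max_def min_def)
      show "continuous_on UNIV (\<lambda>t::real. max x (min y t))" by (intro continuous_intros)
    qed
    have v2F: "v2 \<in> FU" unfolding FU_def v2_def
    proof safe
      show "mono (\<lambda>t::real. max y (min z t))" by (rule monoI) (auto simp: max_def min_def)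
      show "continuous_on UNIV (\<lambda>t::real. max y (min z t))" by (intro continuous_intros)
    qed
    obtain u1 where u1: "u1 \<in> FU" "\<forall>t. g (v1 t) = u1 (g t)" using Bd[OF v1F] by blast
    obtain u2 where u2: "u2 \<in> FU" "\<forall>t. g (v2 t) = u2 (g t)" using Bd[OF v2F] by blast
    have m1: "mono u1" and m2: "mono u2" using u1(1) u2(1) by (auto simp: FU_def)
    have a1: "u1 (g x) = g x" "u1 (g y) = g y" "u1 (g z) = g y"
      using u1(2)[rule_format, of x] u1(2)[rule_format, of y] u1(2)[rule_format, of z] xyz
      by (simp_all add: v1_def)
    have a2: "u2 (g x) = g y" "u2 (g y) = g y" "u2 (g z) = g z"
      using u2(2)[rule_format, of x] u2(2)[rule_format, of y] u2(2)[rule_format, of z] xyz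
      by (simp_all add: v2_def)
    have d: "g x \<noteq> g y" "g y \<noteq> g z" "g x \<noteq> g z" using ginj xyz by auto
    have n1: "\<not> (g y < g x \<and> g x < g z)"
    proof
      assume h: "g y < g x \<and> g x < g z"
      hence "u1 (g x) \<le> u1 (g z)" using monoD[OF m1] by simp
      thus False using a1 h by simp
    qed
    have n2: "\<not> (g z < g x \<and> g x < g y)"
    proof
      assume h: "g z < g x \<and> g x < g y"
      hence "u1 (g z) \<le> u1 (g x)" using monoD[OF m1] by simp
      thus False using a1 h by simp
    qed
    have n3: "\<not> (g x < g z \<and> g z < g y)"
    proof
      assume h: "g x < g z \<and> g z < g y"
      hence "u2 (g x) \<le> u2 (g z)" using monoD[OF m2] by simp
      thus False using a2 h by simp
    qed
    have n4: "\<not> (g y < g z \<and> g z < g x)"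
    proof
      assume h: "g y < g z \<and> g z < g x"
      hence "u2 (g z) \<le> u2 (g x)" using monoD[OF m2] by simp
      thus False using a2 h by simp
    qed
    show ?thesis using d n1 n2 n3 n4 by linarith
  qed
  have chain: "(g p < g q) = (g L < g R)" if "L < p" "p < q" "q < R" for L p q R
  proof -
    have "(g p < g q) = (g L < g q)" using bt[of L p q] that by auto
    also have "\<dots> = (g L < g R)" using bt[of L q R] that by auto
    finally show ?thesis .
  qed
  have hs: "(\<forall>x y. x < y \<longrightarrow> g x < g y) \<or> (\<forall>x y. x < y \<longrightarrow> g y < g x)"
  proof (cases "g 0 < g 1")
    case True
    have "g a < g b" if ab: "a < b" for a b
    proof -
      have "(g a < g b) = (g (min a 0 - 1) < g (max b 1 + 1))" using ab by (intro chain) auto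
      also have "\<dots> = (g 0 < g 1)" by (intro chain[symmetric]) auto
      finally show ?thesis using True by simp
    qed
    thus ?thesis by blast
  next
    case False
    have "g b < g a" if ab: "a < b" for a b
    proof -
      have "(g a < g b) = (g (min a 0 - 1) < g (max b 1 + 1))" using ab by (intro chain) auto
      also have "\<dots> = (g 0 < g 1)" by (intro chain[symmetric]) auto
      finally have "\<not> g a < g b" using False by simp
      moreover have "g a \<noteq> g b" using ginj ab by simp
      ultimately show ?thesis by simp
    qed
    thus ?thesis by blast
  qed
  have cg: "continuous_on UNIV g" using hs smono_cont[OF _ sg] sdec_cont[OF _ sg] by blast
  have ig: "inj g" using hs sinc_inj sdec_inj by blast
  define gi where "gi = inv g"
  have e1: "\<And>y. g (gi y) = y" and e2: "\<And>x. gi (g x) = x"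
    using inv_props[OF ig sg] by (auto simp: gi_def)
  define rh where "rh = (\<lambda>F. gi (\<rho> F))"
  have comm: "rh (Tu u F) = u (rh F)" if u: "u \<in> FU" and F: "F \<in> compact_distrs" for u F
  proof -
    obtain w where w: "w \<in> FU" "\<forall>F\<in>compact_distrs. \<rho> (Tu u F) = w (\<rho> F)" using B u by blast
    have wd: "w (g x) = g (u x)" for x
      using w(2)[rule_format, OF return_in_M[of x]] Tu_return[OF u, of x] by (simp add: g_def)
    have "rh (Tu u F) = gi (w (\<rho> F))" using w(2) F by (simp add: rh_def)
    also have "\<rho> F = g (gi (\<rho> F))" by (simp add: e1)
    also have "gi (w (g (gi (\<rho> F)))) = u (gi (\<rho> F))" by (simp add: wd e2)
    finally show ?thesis by (simp add: rh_def)
  qed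
  have q: "is_quantile rh" by (rule core) (rule comm)
  have "\<forall>F\<in>compact_distrs. \<rho> F = g (rh F)" by (simp add: rh_def e1)
  thus ?thesis using hs cg sg q by blast
qed

theorem proposition2:
  fixes \<rho> :: "real measure \<Rightarrow> real"
  shows "{(\<lambda>F\<in>compact_distrs. u (\<rho> F)) | u. u \<in> FU}
           = {(\<lambda>F\<in>compact_distrs. \<rho> (Tu u F)) | u. u \<in> FU}
     \<longleftrightarrow> (\<exists>h rh. ((\<forall>x y. x < y \<longrightarrow> h x < h y) \<or> (\<forall>x y. x < y \<longrightarrow> h y < h x))
               \<and> continuous_on UNIV h \<and> surj h
               \<and> is_quantile rh
               \<and> (\<forall>F\<in>compact_distrs. \<rho> F = h (rh F)))"
proof
  assume "{(\<lambda>F\<in>compact_distrs. u (\<rho> F)) | u. u \<in> FU}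
           = {(\<lambda>F\<in>compact_distrs. \<rho> (Tu u F)) | u. u \<in> FU}"
  hence AB: "(\<forall>u\<in>FU. \<exists>v\<in>FU. \<forall>F\<in>compact_distrs. u (\<rho> F) = \<rho> (Tu v F)) \<and>
        (\<forall>v\<in>FU. \<exists>u\<in>FU. \<forall>F\<in>compact_distrs. \<rho> (Tu v F) = u (\<rho> F))"
    using set_eq_AB by blast
  show "\<exists>h rh. ((\<forall>x y. x < y \<longrightarrow> h x < h y) \<or> (\<forall>x y. x < y \<longrightarrow> h y < h x))
               \<and> continuous_on UNIV h \<and> surj h
               \<and> is_quantile rh
               \<and> (\<forall>F\<in>compact_distrs. \<rho> F = h (rh F))"
    by (rule dir_only[OF conjunct1[OF AB] conjunct2[OF AB]])
next
  assume "\<exists>h rh. ((\<forall>x y. x < y \<longrightarrow> h x < h y) \<or> (\<forall>x y. x < y \<longrightarrow> h y < h x))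
               \<and> continuous_on UNIV h \<and> surj h
               \<and> is_quantile rh
               \<and> (\<forall>F\<in>compact_distrs. \<rho> F = h (rh F))"
  then obtain h rh where h: "(\<forall>x y. x < y \<longrightarrow> h x < h y) \<or> (\<forall>x y. x < y \<longrightarrow> h y < h x)"
    "continuous_on UNIV h" "surj h" "is_quantile rh" "\<forall>F\<in>compact_distrs. \<rho> F = h (rh F)"
    by blast
  have AB: "(\<forall>u\<in>FU. \<exists>v\<in>FU. \<forall>F\<in>compact_distrs. u (\<rho> F) = \<rho> (Tu v F)) \<and>
        (\<forall>v\<in>FU. \<exists>u\<in>FU. \<forall>F\<in>compact_distrs. \<rho> (Tu v F) = u (\<rho> F))"
    by (rule dir_if[OF h])
  show "{(\<lambda>F\<in>compact_distrs. u (\<rho> F)) | u. u \<in> FU}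
           = {(\<lambda>F\<in>compact_distrs. \<rho> (Tu u F)) | u. u \<in> FU}"
    by (rule iffD2[OF set_eq_AB AB])
qed

end
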